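(* In the setting of the joint threshold-based policy in which $D$ knows that $S$ uses this policy with threshold $P_S$, the per-slot success probability $\phi(P_S)=[1-p(P_{tx})]\,\Psi(P_S,P_D)$ is maximized over $P_S>P_{C,S}$ by the threshold $P_S^*>P_{C,S}$ satisfying $$\exp\Big[-\frac{(2^R-1)(1+\alpha)z}{P_S^*-P_{C,S}}\Big]=\frac{\lambda_S}{P_S^*}.$$
   Context: Parameters: rate $R>0$, noise $z>0$, $\alpha>0$, circuit power $P_{C,S}\ge0$, energy arrival means $\lambda_S,\lambda_D>0$, receive energy $P_D>0$. For threshold $P_S>P_{C,S}$, $P_{tx}=(P_S-P_{C,S})/(1+\alpha)$ and $p(P_{tx})=1-\exp(-(2^R-1)z/P_{tx})$. Under the joint threshold-based policy where $D$ knows $S$'s policy (both nodes act in a slot iff $B_S^t\ge P_S$, $B_D^t\ge P_D$ and the channel is not in outage; infinite batteries, stationary ergodic energy arrivals), the simultaneous activity probability is $\Psi(P_S,P_D)=\min\big(1,\frac{\lambda_S}{[1-p(P_{tx})]P_S},\frac{\lambda_D}{[1-p(P_{tx})]P_D}\big)$. *)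

theory Defs
  imports Complex_Main
begin

definition Ptx :: "real \<Rightarrow> real \<Rightarrow> real \<Rightarrow> real" where
  "Ptx alpha PCS PS = (PS - PCS) / (1 + alpha)"

definition pout :: "real \<Rightarrow> real \<Rightarrow> real \<Rightarrow> real" where
  "pout R z P = 1 - exp (- ((2 powr R - 1) * z / P))"

definition Psi :: "real \<Rightarrow> real \<Rightarrow> real \<Rightarrow> real \<Rightarrow> real \<Rightarrow> real \<Rightarrow> real \<Rightarrow> real \<Rightarrow> real" where
  "Psi R z alpha PCS lamS lamD PS PD =
     (let q = 1 - pout R z (Ptx alpha PCS PS)
      in min 1 (min (lamS / (q * PS)) (lamD / (q * PD))))"

definition phi :: "real \<Rightarrow> real \<Rightarrow> real \<Rightarrow> real \<Rightarrow> real \<Rightarrow> real \<Rightarrow> real \<Rightarrow> real \<Rightarrow> real" where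
  "phi R z alpha PCS lamS lamD PD PS =
     (1 - pout R z (Ptx alpha PCS PS)) * Psi R z alpha PCS lamS lamD PS PD"

end

theory Submission
  imports Defs
begin

lemma phi_min:
  assumes "PS > PCS" "PCS \<ge> 0" "alpha > 0"
  shows "phi R z alpha PCS lamS lamD PD PS =
    min (exp (- ((2 powr R - 1) * (1 + alpha) * z / (PS - PCS)))) (min (lamS / PS) (lamD / PD))"
proof -
  let ?q = "exp (- ((2 powr R - 1) * (1 + alpha) * z / (PS - PCS)))"
  have q: "1 - pout R z (Ptx alpha PCS PS) = ?q"
    unfolding pout_def Ptx_def using assms by (simp add: field_simps)
  have qp: "?q > 0" by simp
  have "?q * min 1 (min (lamS / (?q * PS)) (lamD / (?q * PD))) = min ?q (min (lamS / PS) (lamD / PD))"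
    using qp by (simp add: min_mult_distrib_left)
  then show ?thesis unfolding phi_def Psi_def Let_def q by simp
qed

theorem corollary4:
  fixes R z alpha PCS lamS lamD PD :: real
  assumes "R > 0" and "z > 0" and "alpha > 0" and "PCS \<ge> 0"
    and "lamS > 0" and "lamD > 0" and "PD > 0"
  shows "(\<exists>Pst. Pst > PCS \<and>
            exp (- ((2 powr R - 1) * (1 + alpha) * z / (Pst - PCS))) = lamS / Pst)
       \<and> (\<forall>Pst. Pst > PCS \<and>
            exp (- ((2 powr R - 1) * (1 + alpha) * z / (Pst - PCS))) = lamS / Pst
          \<longrightarrow> (\<forall>PS. PS > PCS \<longrightarrow>
                 phi R z alpha PCS lamS lamD PD PS \<le> phi R z alpha PCS lamS lamD PD Pst))"
proof
  define c where "c = (2 powr R - 1) * (1 + alpha) * z"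
  have "2 powr R > 1" using assms(1) by simp
  hence cpos: "c > 0" unfolding c_def using assms by simp
  define f where "f = (\<lambda>P. exp (- (c / (P - PCS))) - lamS / P)"
  define d where "d = min 1 (c * lamS / (2 * (PCS + 1)))"
  have dpos: "d > 0" using cpos assms unfolding d_def by simp
  have d1: "d \<le> 1" unfolding d_def by simp
  have "d \<le> c * lamS / (2 * (PCS + 1))" unfolding d_def by simp
  hence d2: "d / c \<le> lamS / (2 * (PCS + 1))" using cpos
    by (simp add: divide_le_eq mult.commute)
  have "exp (c/d) \<ge> 1 + c/d" by (rule exp_ge_add_one_self)
  hence "exp (c/d) \<ge> c/d" by linarith
  hence "exp (- (c/d)) \<le> d/c" using cpos dpos
    by (simp add: exp_minus field_simps)
  also have "\<dots> < lamS / (PCS + 1)" using d2 assms(4,5)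
    by (smt (verit, best) divide_strict_left_mono mult_pos_pos)
  also have "\<dots> \<le> lamS / (PCS + d)" using d1 dpos assms(4,5)
    by (intro divide_left_mono) auto
  finally have fa: "f (PCS + d) \<le> 0" unfolding f_def by simp
  define e where "e = 2*c + 2*lamS + 1"
  have epos: "e > 0" using cpos assms unfolding e_def by simp
  have "c / e < 1/2" using cpos assms unfolding e_def by (simp add: field_simps)
  hence "exp (- (c/e)) > 1/2"
    using exp_ge_add_one_self[of "- (c/e)"] by linarith
  moreover have "lamS / (PCS + e) < 1/2" using assms epos cpos unfolding e_def
    by (simp add: field_simps)
  ultimately have fb: "0 \<le> f (PCS + e)" unfolding f_def by (simp only: add_diff_cancel_left')
  have ab: "PCS + d \<le> PCS + e" using d1 unfolding e_def using cpos assms by simp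
  have cont: "continuous_on {PCS + d..PCS + e} f"
    unfolding f_def using dpos assms(4)
    by (intro continuous_intros) auto
  obtain x where x: "x \<ge> PCS + d" "x \<le> PCS + e" "f x = 0"
    using IVT'[of f "PCS + d" 0 "PCS + e", OF fa fb ab cont] by blast
  show "\<exists>Pst. Pst > PCS \<and>
            exp (- ((2 powr R - 1) * (1 + alpha) * z / (Pst - PCS))) = lamS / Pst"
    using x dpos unfolding f_def c_def by (intro exI[of _ x]) auto
next
  define c where "c = (2 powr R - 1) * (1 + alpha) * z"
  have "2 powr R > 1" using assms(1) by simp
  hence cpos: "c > 0" unfolding c_def using assms by simp
  show "\<forall>Pst. Pst > PCS \<and>
            exp (- ((2 powr R - 1) * (1 + alpha) * z / (Pst - PCS))) = lamS / Pst
          \<longrightarrow> (\<forall>PS. PS > PCS \<longrightarrow>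
                 phi R z alpha PCS lamS lamD PD PS \<le> phi R z alpha PCS lamS lamD PD Pst)"
  proof (intro allI impI, elim conjE)
    fix Pst PS assume h: "Pst > PCS" "exp (- ((2 powr R - 1) * (1 + alpha) * z / (Pst - PCS))) = lamS / Pst" "PS > PCS"
    have h2: "exp (- (c / (Pst - PCS))) = lamS / Pst" using h(2) unfolding c_def .
    have pst: "phi R z alpha PCS lamS lamD PD Pst = min (lamS / Pst) (lamD / PD)"
      using phi_min[OF h(1) assms(4,3)] h2 unfolding c_def by simp
    have ps: "phi R z alpha PCS lamS lamD PD PS = min (exp (- (c / (PS - PCS)))) (min (lamS / PS) (lamD / PD))"
      using phi_min[OF h(3) assms(4,3)] unfolding c_def by simp
    show "phi R z alpha PCS lamS lamD PD PS \<le> phi R z alpha PCS lamS lamD PD Pst"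
    proof (cases "PS \<le> Pst")
      case True
      have "c / (Pst - PCS) \<le> c / (PS - PCS)" using True h cpos
        by (intro divide_left_mono) auto
      hence "exp (- (c / (PS - PCS))) \<le> lamS / Pst" using h2 by (metis exp_le_cancel_iff neg_le_iff_le)
      then show ?thesis unfolding ps pst by linarith
    next
      case False
      have "lamS / PS \<le> lamS / Pst" using False h assms(4,5)
        by (intro divide_left_mono) auto
      then show ?thesis unfolding ps pst by linarith
    qed
  qed
qed

end
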